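(* Let $n\ge 2$ and let $\lvert\psi\rangle\in(\mathbb{C}^d)^{\otimes n}$ be a unit vector with Schmidt decomposition across qudit $1$ versus qudits $2,\ldots,n$ given by $\lvert\psi\rangle=\sum_{i=1}^d\alpha_i\lvert w_i\rangle\lvert v_i\rangle$, where $\alpha_i\ge0$, $\{\lvert w_i\rangle\}\subseteq\mathbb{C}^d$ and $\{\lvert v_i\rangle\}\subseteq(\mathbb{C}^d)^{\otimes n-1}$ are orthonormal sets. Define $\rho:=\sum_{i=1}^d\alpha_i^2\,\lvert w_i\rangle\langle w_i\rvert\otimes\lvert v_i\rangle\langle v_i\rvert$. Let $\Pi$ be a projector acting on some subset $\mathcal{S}\subseteq\{1,\ldots,n\}$ of the qudits (i.e. a projector on the qudits in $\mathcal{S}$ tensored with the identity on the others). If $\Pi$ crosses the Schmidt cut, i.e. $1\in\mathcal{S}$ and $\mathcal{S}\cap\{2,\ldots,n\}\neq\emptyset$, then $\mathrm{Tr}(\Pi\rho)\ge\frac1d\mathrm{Tr}(\Pi\lvert\psi\rangle\langle\psi\rvert)$. Otherwise $\mathrm{Tr}(\Pi\rho)=\mathrm{Tr}(\Pi\lvert\psi\rangle\langle\psi\rvert)$. *)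

theory Defs
  imports Complex_Main "HOL-Library.Complex_Order"
begin

text \<open>Qudits are numbered 0,...,n-1 (paper's qudit k is index k-1).
  A computational basis state of the qudits in an index set S is a function
  x :: nat => nat with x k < d for k in S and x k = 0 outside S.
  Vectors are functions from basis states to complex numbers, operators are
  matrices indexed by basis states.\<close>

definition configs :: "nat set \<Rightarrow> nat \<Rightarrow> (nat \<Rightarrow> nat) set" where
  "configs S d = {x. (\<forall>k\<in>S. x k < d) \<and> (\<forall>k. k \<notin> S \<longrightarrow> x k = 0)}"

definition restr :: "nat set \<Rightarrow> (nat \<Rightarrow> nat) \<Rightarrow> (nat \<Rightarrow> nat)" where
  "restr S x = (\<lambda>k. if k \<in> S then x k else 0)"

text \<open>basis state of qudits 2..n (indices 1..n-1), shifted to indices 0..n-2\<close>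
definition tail_cfg :: "(nat \<Rightarrow> nat) \<Rightarrow> (nat \<Rightarrow> nat)" where
  "tail_cfg x = (\<lambda>k. x (Suc k))"

definition mtrace :: "'i set \<Rightarrow> ('i \<Rightarrow> 'i \<Rightarrow> complex) \<Rightarrow> complex" where
  "mtrace I A = (\<Sum>x\<in>I. A x x)"

definition mmult :: "'i set \<Rightarrow> ('i \<Rightarrow> 'i \<Rightarrow> complex) \<Rightarrow> ('i \<Rightarrow> 'i \<Rightarrow> complex) \<Rightarrow> ('i \<Rightarrow> 'i \<Rightarrow> complex)" where
  "mmult I A B = (\<lambda>x y. \<Sum>z\<in>I. A x z * B z y)"

definition outer :: "('i \<Rightarrow> complex) \<Rightarrow> ('i \<Rightarrow> complex) \<Rightarrow> ('i \<Rightarrow> 'i \<Rightarrow> complex)" where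
  "outer u v = (\<lambda>x y. u x * cnj (v y))"

definition is_projector :: "'i set \<Rightarrow> ('i \<Rightarrow> 'i \<Rightarrow> complex) \<Rightarrow> bool" where
  "is_projector I P \<longleftrightarrow> (\<forall>a\<in>I. \<forall>b\<in>I. P a b = cnj (P b a) \<and> mmult I P P a b = P a b)"

text \<open>P acting on the qudits in S, tensored with the identity on the remaining qudits of {..<n}\<close>
definition embed_op :: "nat \<Rightarrow> nat set \<Rightarrow> ((nat \<Rightarrow> nat) \<Rightarrow> (nat \<Rightarrow> nat) \<Rightarrow> complex)
    \<Rightarrow> ((nat \<Rightarrow> nat) \<Rightarrow> (nat \<Rightarrow> nat) \<Rightarrow> complex)" where
  "embed_op n S P = (\<lambda>x y. P (restr S x) (restr S y) *
      (if \<forall>k\<in>{..<n} - S. x k = y k then 1 else 0))"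

definition orthonormal_fam :: "nat \<Rightarrow> 'i set \<Rightarrow> (nat \<Rightarrow> 'i \<Rightarrow> complex) \<Rightarrow> bool" where
  "orthonormal_fam d I u \<longleftrightarrow>
     (\<forall>i<d. \<forall>j<d. (\<Sum>x\<in>I. cnj (u i x) * u j x) = (if i = j then 1 else 0))"

end

theory Submission
  imports Defs
begin

lemma finite_configs: "finite I \<Longrightarrow> finite (configs I d)"
proof -
  assume "finite I"
  have "configs I d = {f. \<forall>x. (x \<in> I \<longrightarrow> f x \<in> {..<d}) \<and> (x \<notin> I \<longrightarrow> f x = 0)}"
    unfolding configs_def by auto
  thus ?thesis using finite_set_of_finite_funs[OF \<open>finite I\<close>, of "{..<d}" 0] by simp
qed

lemma restr_in_configs: "x \<in> configs I d \<Longrightarrow> S \<subseteq> I \<Longrightarrow> restr S x \<in> configs S d"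
  unfolding configs_def restr_def by auto

lemma cs_real:
  fixes a :: "nat \<Rightarrow> real"
  shows "(\<Sum>i<d. a i)\<^sup>2 \<le> real d * (\<Sum>i<d. (a i)\<^sup>2)"
proof -
  have "0 \<le> (\<Sum>i<d. \<Sum>j<d. (a i - a j)\<^sup>2)" by (intro sum_nonneg) auto
  also have "\<dots> = (\<Sum>i<d. \<Sum>j<d. (a i)\<^sup>2 + (a j)\<^sup>2 - 2 * a i * a j)"
    by (simp add: power2_diff)
  also have "\<dots> = 2 * (real d * (\<Sum>i<d. (a i)\<^sup>2)) - 2 * (\<Sum>i<d. a i)\<^sup>2"
  proof -
    have "(\<Sum>i<d. \<Sum>j<d. (a j)\<^sup>2) = (\<Sum>i<d. \<Sum>j<d. (a i)\<^sup>2)" by (rule sum.swap)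
    moreover have "(\<Sum>i<d. \<Sum>j<d. 2 * a i * a j) = 2 * (\<Sum>i<d. a i)\<^sup>2"
    proof -
      have "(\<Sum>i<d. \<Sum>j<d. 2 * a i * a j) = (\<Sum>i<d. (2 * a i) * (\<Sum>j<d. a j))"
        by (simp add: sum_distrib_left)
      also have "\<dots> = (\<Sum>i<d. 2 * a i) * (\<Sum>j<d. a j)"
        by (rule sum_distrib_right[symmetric])
      also have "\<dots> = 2 * (\<Sum>i<d. a i) * (\<Sum>j<d. a j)"
        by (simp add: sum_distrib_left)
      finally show ?thesis by (simp add: power2_eq_square)
    qed
    ultimately show ?thesis by (simp add: sum.distrib sum_subtractf)
  qed
  finally show ?thesis by simp
qed

lemma cs_complex:
  fixes u :: "nat \<Rightarrow> complex"
  shows "(cmod (\<Sum>i<d. u i))\<^sup>2 \<le> real d * (\<Sum>i<d. (cmod (u i))\<^sup>2)"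
proof -
  have "cmod (\<Sum>i<d. u i) \<le> (\<Sum>i<d. cmod (u i))" by (rule norm_sum)
  hence "(cmod (\<Sum>i<d. u i))\<^sup>2 \<le> (\<Sum>i<d. cmod (u i))\<^sup>2"
    by (simp add: power_mono)
  also have "\<dots> \<le> real d * (\<Sum>i<d. (cmod (u i))\<^sup>2)" by (rule cs_real)
  finally show ?thesis .
qed

lemma psd:
  fixes H :: "'i \<Rightarrow> 'i \<Rightarrow> complex"
  assumes fin: "finite N"
    and herm: "\<And>x z. x \<in> N \<Longrightarrow> z \<in> N \<Longrightarrow> H x z = cnj (H z x)"
    and idem: "\<And>x y. x \<in> N \<Longrightarrow> y \<in> N \<Longrightarrow> (\<Sum>z\<in>N. H x z * H z y) = H x y"
  shows "(\<Sum>x\<in>N. \<Sum>z\<in>N. cnj (a x) * H x z * a z)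
       = complex_of_real (\<Sum>x\<in>N. (cmod (\<Sum>z\<in>N. H x z * a z))\<^sup>2)"
proof -
  define b where "b = (\<lambda>x. \<Sum>z\<in>N. H x z * a z)"
  have b2: "b x = (\<Sum>u\<in>N. H x u * b u)" if "x \<in> N" for x
  proof -
    have "b x = (\<Sum>z\<in>N. (\<Sum>u\<in>N. H x u * H u z) * a z)"
      unfolding b_def using that idem by (intro sum.cong) auto
    also have "\<dots> = (\<Sum>u\<in>N. H x u * b u)"
      unfolding b_def sum_distrib_left sum_distrib_right
      by (subst sum.swap) (simp add: mult.assoc)
    finally show ?thesis .
  qed
  have "(\<Sum>x\<in>N. \<Sum>z\<in>N. cnj (a x) * H x z * a z) = (\<Sum>x\<in>N. cnj (a x) * b x)"
    unfolding b_def by (simp add: sum_distrib_left mult.assoc)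
  also have "\<dots> = (\<Sum>x\<in>N. \<Sum>u\<in>N. cnj (a x) * H x u * b u)"
    using b2 by (simp add: sum_distrib_left mult.assoc)
  also have "\<dots> = (\<Sum>u\<in>N. (\<Sum>x\<in>N. cnj (a x) * H x u) * b u)"
    unfolding sum_distrib_right by (subst sum.swap) simp
  also have "\<dots> = (\<Sum>u\<in>N. cnj (b u) * b u)"
  proof (intro sum.cong refl)
    fix u assume u: "u \<in> N"
    have "(\<Sum>x\<in>N. cnj (a x) * H x u) = cnj (\<Sum>x\<in>N. H u x * a x)"
      unfolding cnj_sum by (intro sum.cong refl) (simp add: herm[OF _ u] mult.commute)
    thus "(\<Sum>x\<in>N. cnj (a x) * H x u) * b u = cnj (b u) * b u" unfolding b_def by simp
  qed
  also have "\<dots> = complex_of_real (\<Sum>x\<in>N. (cmod (b x))\<^sup>2)"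
    by (simp add: complex_norm_square mult.commute flip: of_real_power)
  finally show ?thesis unfolding b_def .
qed

lemma herm_embed:
  assumes S: "S \<subseteq> {..<n}" and proj: "is_projector (configs S d) P"
    and x: "x \<in> configs {..<n} d" and z: "z \<in> configs {..<n} d"
  shows "embed_op n S P x z = cnj (embed_op n S P z x)"
proof -
  have "restr S x \<in> configs S d" "restr S z \<in> configs S d"
    using restr_in_configs S x z by auto
  hence "P (restr S x) (restr S z) = cnj (P (restr S z) (restr S x))"
    using proj unfolding is_projector_def by blast
  moreover have "(\<forall>k\<in>{..<n} - S. x k = z k) = (\<forall>k\<in>{..<n} - S. z k = x k)" by auto
  ultimately show ?thesis unfolding embed_op_def by simp
qed

lemma idem_embed:
  assumes S: "S \<subseteq> {..<n}" and proj: "is_projector (configs S d) P"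
    and x: "x \<in> configs {..<n} d" and y: "y \<in> configs {..<n} d"
  shows "(\<Sum>z\<in>configs {..<n} d. embed_op n S P x z * embed_op n S P z y) = embed_op n S P x y"
proof -
  define N where "N = configs {..<n} d"
  define C where "C = configs S d"
  define A where "A = {z\<in>N. \<forall>k\<in>{..<n} - S. x k = z k}"
  define mg where "mg = (\<lambda>c k. if k \<in> S then c k else x k)"
  define cond where "cond = (\<forall>k\<in>{..<n} - S. x k = y k)"
  have inv: "mg (restr S z) = z" if z: "z \<in> A" for z
  proof
    fix k show "mg (restr S z) k = z k"
      using z x S unfolding mg_def A_def N_def restr_def configs_def
      by (cases "k < n") auto
  qed
  have finN: "finite N" unfolding N_def by (rule finite_configs) simp
  have "(\<Sum>z\<in>N. embed_op n S P x z * embed_op n S P z y) = (\<Sum>z\<in>A. embed_op n S P x z * embed_op n S P z y)"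
    by (rule sum.mono_neutral_right[OF finN]) (auto simp: A_def embed_op_def)
  also have "\<dots> = (\<Sum>c\<in>C. embed_op n S P x (mg c) * embed_op n S P (mg c) y)"
  proof (rule sum.reindex_bij_witness[where i = mg and j = "restr S"])
    fix c assume c: "c \<in> C"
    show "restr S (mg c) = c" using c unfolding restr_def mg_def C_def configs_def by auto
    show "mg c \<in> A" using c x S unfolding mg_def A_def N_def C_def configs_def by auto
  next
    fix z assume z: "z \<in> A"
    show "mg (restr S z) = z" using inv z .
    show "restr S z \<in> C" using z S restr_in_configs unfolding A_def N_def C_def by blast
  qed (simp add: inv)
  also have "\<dots> = (\<Sum>c\<in>C. P (restr S x) c * (P c (restr S y) * (if cond then 1 else 0)))"
  proof (intro sum.cong refl)
    fix c assume c: "c \<in> C"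
    have r: "restr S (mg c) = c" using c unfolding restr_def mg_def C_def configs_def by auto
    have a: "\<forall>k\<in>{..<n} - S. x k = mg c k" unfolding mg_def by auto
    have b: "(\<forall>k\<in>{..<n} - S. mg c k = y k) = cond" unfolding mg_def cond_def by auto
    show "embed_op n S P x (mg c) * embed_op n S P (mg c) y
        = P (restr S x) c * (P c (restr S y) * (if cond then 1 else 0))"
      unfolding embed_op_def r using a b by simp
  qed
  also have "\<dots> = mmult C P P (restr S x) (restr S y) * (if cond then 1 else 0)"
    unfolding mmult_def by (simp add: sum_distrib_right mult.assoc)
  also have "\<dots> = P (restr S x) (restr S y) * (if cond then 1 else 0)"
  proof -
    have "mmult C P P (restr S x) (restr S y) = P (restr S x) (restr S y)"
      using proj restr_in_configs[OF x S] restr_in_configs[OF y S]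
      unfolding is_projector_def C_def by blast
    thus ?thesis by simp
  qed
  also have "\<dots> = embed_op n S P x y" unfolding embed_op_def cond_def by simp
  finally show ?thesis unfolding N_def .
qed

definition pre :: "nat \<Rightarrow> (nat \<Rightarrow> nat) \<Rightarrow> (nat \<Rightarrow> nat)" where
  "pre a y = (\<lambda>k. if k = 0 then a else y (k - 1))"

lemma pre_0[simp]: "pre a y 0 = a" by (simp add: pre_def)
lemma tail_pre[simp]: "tail_cfg (pre a y) = y" by (simp add: pre_def tail_cfg_def)

lemma sw3: "(\<Sum>i\<in>A. \<Sum>j\<in>B. \<Sum>k\<in>C. f i j k) = (\<Sum>k\<in>C. \<Sum>i\<in>A. \<Sum>j\<in>B. f i j k)"
proof -
  have "(\<Sum>i\<in>A. \<Sum>j\<in>B. \<Sum>k\<in>C. f i j k) = (\<Sum>i\<in>A. \<Sum>k\<in>C. \<Sum>j\<in>B. f i j k)"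
    by (intro sum.cong refl) (rule sum.swap)
  also have "\<dots> = (\<Sum>k\<in>C. \<Sum>i\<in>A. \<Sum>j\<in>B. f i j k)" by (rule sum.swap)
  finally show ?thesis .
qed

lemma sw4: "(\<Sum>i\<in>A. \<Sum>j\<in>B. \<Sum>k\<in>C. \<Sum>l\<in>D. f i j k l) = (\<Sum>k\<in>C. \<Sum>l\<in>D. \<Sum>i\<in>A. \<Sum>j\<in>B. f i j k l)"
proof -
  have "(\<Sum>i\<in>A. \<Sum>j\<in>B. \<Sum>k\<in>C. \<Sum>l\<in>D. f i j k l) = (\<Sum>k\<in>C. \<Sum>i\<in>A. \<Sum>j\<in>B. \<Sum>l\<in>D. f i j k l)"
    by (rule sw3)
  also have "\<dots> = (\<Sum>k\<in>C. \<Sum>l\<in>D. \<Sum>i\<in>A. \<Sum>j\<in>B. f i j k l)"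
    by (intro sum.cong refl) (rule sw3)
  finally show ?thesis .
qed

lemma sum_split:
  assumes n: "n \<ge> 1"
  shows "(\<Sum>x\<in>configs {..<n} d. f x) = (\<Sum>a<d. \<Sum>y\<in>configs {..<n-1} d. f (pre a y))"
proof -
  have "(\<Sum>a<d. \<Sum>y\<in>configs {..<n-1} d. f (pre a y)) = (\<Sum>(a,y)\<in>{..<d} \<times> configs {..<n-1} d. f (pre a y))"
    by (rule sum.cartesian_product)
  also have "\<dots> = (\<Sum>x\<in>configs {..<n} d. f x)"
  proof (rule sum.reindex_bij_witness[where i = "\<lambda>x. (x 0, tail_cfg x)" and j = "\<lambda>(a,y). pre a y"])
    fix p assume p: "p \<in> {..<d} \<times> configs {..<n-1} d"
    then obtain a y where ay: "p = (a,y)" "a < d" "y \<in> configs {..<n-1} d" by blast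
    show "(\<lambda>x. (x 0, tail_cfg x)) ((\<lambda>(a,y). pre a y) p) = p" using ay by simp
    show "(\<lambda>(a,y). pre a y) p \<in> configs {..<n} d"
      using ay n unfolding configs_def pre_def by auto
    show "f ((\<lambda>(a,y). pre a y) p) = (\<lambda>(a,y). f (pre a y)) p"
      using ay by simp
  next
    fix x assume x: "x \<in> configs {..<n} d"
    show "(\<lambda>(a,y). pre a y) ((\<lambda>x. (x 0, tail_cfg x)) x) = x"
      by (auto simp: pre_def tail_cfg_def)
    show "(\<lambda>x. (x 0, tail_cfg x)) x \<in> {..<d} \<times> configs {..<n-1} d"
      using x n unfolding configs_def tail_cfg_def by auto
  qed
  finally show ?thesis by simp
qed

lemma factor_lemma:
  fixes H :: "(nat \<Rightarrow> nat) \<Rightarrow> (nat \<Rightarrow> nat) \<Rightarrow> complex"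
  assumes n: "n \<ge> 1"
    and fac: "\<And>a b y y'. a < d \<Longrightarrow> b < d \<Longrightarrow> y \<in> configs {..<n-1} d \<Longrightarrow> y' \<in> configs {..<n-1} d
        \<Longrightarrow> H (pre a y) (pre b y') = F a b * G y y'"
  shows "(\<Sum>x\<in>configs {..<n} d. \<Sum>z\<in>configs {..<n} d.
            cnj (w1 (x 0) * v1 (tail_cfg x)) * H x z * (w2 (z 0) * v2 (tail_cfg z)))
       = (\<Sum>a<d. \<Sum>b<d. cnj (w1 a) * F a b * w2 b)
         * (\<Sum>y\<in>configs {..<n-1} d. \<Sum>y'\<in>configs {..<n-1} d. cnj (v1 y) * G y y' * v2 y')"
  (is "?L = ?R")
proof -
  define M where "M = configs {..<n-1} d"
  have "?L = (\<Sum>a<d. \<Sum>y\<in>M. \<Sum>b<d. \<Sum>y'\<in>M.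
       cnj (w1 a * v1 y) * H (pre a y) (pre b y') * (w2 b * v2 y'))"
    unfolding M_def by (simp add: sum_split[OF n])
  also have "\<dots> = (\<Sum>a<d. \<Sum>y\<in>M. \<Sum>b<d. \<Sum>y'\<in>M.
       (cnj (w1 a) * F a b * w2 b) * (cnj (v1 y) * G y y' * v2 y'))"
    by (intro sum.cong refl) (simp add: fac M_def)
  also have "\<dots> = ?R"
    unfolding M_def sum_product ..
  finally show ?thesis .
qed

lemma delta_sum:
  fixes c :: complex
  assumes "finite B"
  shows "(\<Sum>b\<in>B. c * (if a = b then 1 else 0) * g b) = (if a \<in> B then c * g a else 0)"
proof -
  have "(\<Sum>b\<in>B. c * (if a = b then 1 else 0) * g b) = (\<Sum>b\<in>B. if a = b then c * g b else 0)"
    by (intro sum.cong refl) simp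
  also have "\<dots> = (if a \<in> B then c * g a else 0)" using assms by (simp add: sum.delta)
  finally show ?thesis .
qed

lemma cross_zero:
  assumes n2: "n \<ge> 2" and S: "S \<subseteq> {..<n}" and nc: "\<not> (0 \<in> S \<and> S \<inter> {1..<n} \<noteq> {})"
    and w_on: "orthonormal_fam d {..<d} w"
    and v_on: "orthonormal_fam d (configs {..<n-1} d) v"
    and ij: "i < d" "j < d" "i \<noteq> j"
  shows "(\<Sum>x\<in>configs {..<n} d. \<Sum>z\<in>configs {..<n} d.
            cnj (w i (x 0) * v i (tail_cfg x)) * embed_op n S P x z * (w j (z 0) * v j (tail_cfg z))) = 0"
proof -
  define M where "M = configs {..<n-1} d"
  have n1: "n \<ge> 1" using n2 by simp
  have finM: "finite M" unfolding M_def by (rule finite_configs) simp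
  show ?thesis
  proof (cases "0 \<in> S")
    case False
    define G where "G = (\<lambda>y y'. embed_op n S P (pre 0 y) (pre 0 y'))"
    have fac: "embed_op n S P (pre a y) (pre b y') = (if a = b then 1 else 0) * G y y'" for a b y y'
    proof -
      have r: "restr S (pre a y) = restr S (pre 0 y)" "restr S (pre b y') = restr S (pre 0 y')"
        using False unfolding restr_def pre_def by auto
      show ?thesis
      proof (cases "a = b")
        case True
        have "(\<forall>k\<in>{..<n} - S. pre a y k = pre b y' k) = (\<forall>k\<in>{..<n} - S. pre 0 y k = pre 0 y' k)"
          using True unfolding pre_def by auto
        thus ?thesis unfolding G_def embed_op_def r using True by simp
      next
        case f2: False
        have "\<not> (\<forall>k\<in>{..<n} - S. pre a y k = pre b y' k)"
          using f2 False n2 by (auto simp: pre_def intro!: bexI[of _ 0])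
        thus ?thesis unfolding embed_op_def by (subst if_not_P, assumption) (use f2 in simp)
      qed
    qed
    have "(\<Sum>x\<in>configs {..<n} d. \<Sum>z\<in>configs {..<n} d.
            cnj (w i (x 0) * v i (tail_cfg x)) * embed_op n S P x z * (w j (z 0) * v j (tail_cfg z)))
       = (\<Sum>a<d. \<Sum>b<d. cnj (w i a) * (if a = b then 1 else 0) * w j b)
         * (\<Sum>y\<in>configs {..<n-1} d. \<Sum>y'\<in>configs {..<n-1} d. cnj (v i y) * G y y' * v j y')"
      by (rule factor_lemma[OF n1]) (rule fac)
    also have "(\<Sum>a<d. \<Sum>b<d. cnj (w i a) * (if a = b then 1 else 0) * w j b) = (\<Sum>a<d. cnj (w i a) * w j a)"
      by (intro sum.cong refl) (simp add: delta_sum)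
    also have "\<dots> = 0" using w_on ij unfolding orthonormal_fam_def by simp
    finally show ?thesis by simp
  next
    case True
    have S0: "S \<subseteq> {0}"
    proof
      fix k assume k: "k \<in> S"
      show "k \<in> {0}"
      proof (rule ccontr)
        assume "k \<notin> {0}"
        hence "k \<in> S \<inter> {1..<n}" using k S by auto
        thus False using nc True by blast
      qed
    qed
    define F where "F = (\<lambda>a b. embed_op n S P (pre a (\<lambda>_. 0)) (pre b (\<lambda>_. 0)))"
    have fac: "embed_op n S P (pre a y) (pre b y') = F a b * (if y = y' then 1 else 0)"
      if y: "y \<in> M" and y': "y' \<in> M" for a b y y'
    proof -
      have rr: "restr S (pre c u) = restr S (pre c (\<lambda>_. 0))" for c u
      proof (rule ext)
        fix k show "restr S (pre c u) k = restr S (pre c (\<lambda>_. 0)) k"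
        proof (cases "k \<in> S")
          case True
          hence "k = 0" using S0 by blast
          thus ?thesis using True by (simp add: restr_def)
        qed (simp add: restr_def)
      qed
      note r = rr[of a y] rr[of b y']
      show ?thesis
      proof (cases "y = y'")
        case True
        have "(\<forall>k\<in>{..<n} - S. pre a y k = pre b y' k) = (\<forall>k\<in>{..<n} - S. pre a (\<lambda>_. 0) k = pre b (\<lambda>_. 0) k)"
        proof -
          have e1: "\<And>k. (pre a y k = pre b y' k) = (k = 0 \<longrightarrow> a = b)" using True by (simp add: pre_def)
          have e2: "\<And>k. (pre a (\<lambda>_. 0) k = pre b (\<lambda>_. 0) k) = (k = 0 \<longrightarrow> a = b)" by (simp add: pre_def)
          show ?thesis unfolding e1 e2 ..
        qed
        thus ?thesis unfolding F_def embed_op_def r using True by simp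
      next
        case f2: False
        then obtain m where m: "y m \<noteq> y' m" by auto
        have "m < n - 1"
        proof (rule ccontr)
          assume "\<not> m < n - 1"
          hence "y m = 0" "y' m = 0" using y y' unfolding M_def configs_def by auto
          thus False using m by simp
        qed
        hence "Suc m \<in> {..<n} - S" using S0 by auto
        moreover have "pre a y (Suc m) \<noteq> pre b y' (Suc m)" using m by (simp add: pre_def)
        ultimately have "\<not> (\<forall>k\<in>{..<n} - S. pre a y k = pre b y' k)" by blast
        thus ?thesis unfolding embed_op_def by (subst if_not_P, assumption) (use f2 in simp)
      qed
    qed
    have "(\<Sum>x\<in>configs {..<n} d. \<Sum>z\<in>configs {..<n} d.
            cnj (w i (x 0) * v i (tail_cfg x)) * embed_op n S P x z * (w j (z 0) * v j (tail_cfg z)))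
       = (\<Sum>a<d. \<Sum>b<d. cnj (w i a) * F a b * w j b)
         * (\<Sum>y\<in>M. \<Sum>y'\<in>M. cnj (v i y) * (if y = y' then 1 else 0) * v j y')"
      unfolding M_def by (rule factor_lemma[OF n1]) (rule fac[unfolded M_def])
    also have "(\<Sum>y\<in>M. \<Sum>y'\<in>M. cnj (v i y) * (if y = y' then 1 else 0) * v j y') = (\<Sum>y\<in>M. cnj (v i y) * v j y)"
      by (intro sum.cong refl) (simp add: delta_sum finM)
    also have "\<dots> = 0" using v_on ij unfolding orthonormal_fam_def M_def by simp
    finally show ?thesis by simp
  qed
qed

lemma prod3_sums:
  fixes A B :: "nat \<Rightarrow> complex" and H :: complex
  shows "(\<Sum>i\<in>I. A i) * H * (\<Sum>j\<in>J. B j) = (\<Sum>i\<in>I. \<Sum>j\<in>J. A i * H * B j)"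
proof -
  have "(\<Sum>i\<in>I. A i) * H * (\<Sum>j\<in>J. B j) = (\<Sum>i\<in>I. A i * H) * (\<Sum>j\<in>J. B j)"
    by (simp add: sum_distrib_right)
  also have "\<dots> = (\<Sum>i\<in>I. \<Sum>j\<in>J. A i * H * B j)" by (rule sum_product)
  finally show ?thesis .
qed

theorem lemma1:
  fixes n d :: nat
    and \<alpha> :: "nat \<Rightarrow> real"
    and w :: "nat \<Rightarrow> nat \<Rightarrow> complex"
    and v :: "nat \<Rightarrow> (nat \<Rightarrow> nat) \<Rightarrow> complex"
    and \<psi> :: "(nat \<Rightarrow> nat) \<Rightarrow> complex"
    and S :: "nat set"
    and P :: "(nat \<Rightarrow> nat) \<Rightarrow> (nat \<Rightarrow> nat) \<Rightarrow> complex"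
  assumes n2: "n \<ge> 2"
    and unit: "(\<Sum>x\<in>configs {..<n} d. (cmod (\<psi> x))\<^sup>2) = 1"
    and alpha_nonneg: "\<forall>i<d. \<alpha> i \<ge> 0"
    and w_on: "orthonormal_fam d {..<d} w"
    and v_on: "orthonormal_fam d (configs {..<n-1} d) v"
    and schmidt: "\<forall>x\<in>configs {..<n} d.
        \<psi> x = (\<Sum>i<d. complex_of_real (\<alpha> i) * w i (x 0) * v i (tail_cfg x))"
    and S_sub: "S \<subseteq> {..<n}"
    and proj: "is_projector (configs S d) P"
  defines "\<rho> \<equiv> (\<lambda>x y. \<Sum>i<d. complex_of_real ((\<alpha> i)\<^sup>2) *
        (w i (x 0) * cnj (w i (y 0))) * (v i (tail_cfg x) * cnj (v i (tail_cfg y))))"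
    and "\<Pi> \<equiv> embed_op n S P"
    and "N \<equiv> configs {..<n} d"
  shows "(0 \<in> S \<and> S \<inter> {1..<n} \<noteq> {} \<longrightarrow>
            mtrace N (mmult N \<Pi> \<rho>) \<ge> mtrace N (mmult N \<Pi> (outer \<psi> \<psi>)) / of_nat d)
       \<and> (\<not> (0 \<in> S \<and> S \<inter> {1..<n} \<noteq> {}) \<longrightarrow>
            mtrace N (mmult N \<Pi> \<rho>) = mtrace N (mmult N \<Pi> (outer \<psi> \<psi>)))"
proof -
  define \<phi> where "\<phi> = (\<lambda>i x. w i (x 0) * v i (tail_cfg x))"
  define c where "c = (\<lambda>i. complex_of_real (\<alpha> i))"
  define Bf where "Bf = (\<lambda>a b. \<Sum>x\<in>N. \<Sum>z\<in>N. cnj (a x) * \<Pi> x z * b z)"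
  have finN: "finite N" unfolding N_def by (rule finite_configs) simp
  have herm: "\<Pi> x z = cnj (\<Pi> z x)" if "x \<in> N" "z \<in> N" for x z
    unfolding \<Pi>_def by (rule herm_embed[OF S_sub proj]) (use that in \<open>simp_all add: N_def\<close>)
  have idem: "(\<Sum>z\<in>N. \<Pi> x z * \<Pi> z y) = \<Pi> x y" if "x \<in> N" "y \<in> N" for x y
    unfolding \<Pi>_def N_def by (rule idem_embed[OF S_sub proj]) (use that in \<open>simp_all add: N_def\<close>)
  have psi_eq: "\<psi> x = (\<Sum>i<d. c i * \<phi> i x)" if "x \<in> N" for x
    using schmidt that unfolding N_def c_def \<phi>_def by (simp add: mult.assoc)
  have T_rho: "mtrace N (mmult N \<Pi> \<rho>) = (\<Sum>i<d. complex_of_real ((\<alpha> i)\<^sup>2) * Bf (\<phi> i) (\<phi> i))"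
  proof -
    have "mtrace N (mmult N \<Pi> \<rho>) = (\<Sum>x\<in>N. \<Sum>z\<in>N. \<Sum>i<d.
            complex_of_real ((\<alpha> i)\<^sup>2) * (cnj (\<phi> i x) * \<Pi> x z * \<phi> i z))"
      unfolding mtrace_def mmult_def \<rho>_def \<phi>_def
      by (intro sum.cong refl) (simp add: sum_distrib_left algebra_simps)
    also have "\<dots> = (\<Sum>i<d. \<Sum>x\<in>N. \<Sum>z\<in>N.
            complex_of_real ((\<alpha> i)\<^sup>2) * (cnj (\<phi> i x) * \<Pi> x z * \<phi> i z))"
      by (rule sw3)
    also have "\<dots> = (\<Sum>i<d. complex_of_real ((\<alpha> i)\<^sup>2) * Bf (\<phi> i) (\<phi> i))"
      unfolding Bf_def by (simp add: sum_distrib_left)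
    finally show ?thesis .
  qed
  have T_psi: "mtrace N (mmult N \<Pi> (outer \<psi> \<psi>)) = Bf \<psi> \<psi>"
    unfolding mtrace_def mmult_def outer_def Bf_def
    by (intro sum.cong refl) (simp add: sum_distrib_left algebra_simps)
  show ?thesis
  proof (intro conjI impI)
    assume nc: "\<not> (0 \<in> S \<and> S \<inter> {1..<n} \<noteq> {})"
    have "Bf \<psi> \<psi> = (\<Sum>x\<in>N. \<Sum>z\<in>N. cnj (\<Sum>i<d. c i * \<phi> i x) * \<Pi> x z * (\<Sum>j<d. c j * \<phi> j z))"
      unfolding Bf_def by (intro sum.cong refl) (simp add: psi_eq)
    also have "\<dots> = (\<Sum>x\<in>N. \<Sum>z\<in>N. \<Sum>i<d. \<Sum>j<d. (cnj (c i) * c j) * (cnj (\<phi> i x) * \<Pi> x z * \<phi> j z))"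
      unfolding cnj_sum prod3_sums by (intro sum.cong refl) (simp add: algebra_simps)
    also have "\<dots> = (\<Sum>i<d. \<Sum>j<d. \<Sum>x\<in>N. \<Sum>z\<in>N. (cnj (c i) * c j) * (cnj (\<phi> i x) * \<Pi> x z * \<phi> j z))"
      by (rule sw4)
    also have "\<dots> = (\<Sum>i<d. \<Sum>j<d. (cnj (c i) * c j) * Bf (\<phi> i) (\<phi> j))"
      unfolding Bf_def by (simp add: sum_distrib_left)
    also have "\<dots> = (\<Sum>i<d. complex_of_real ((\<alpha> i)\<^sup>2) * Bf (\<phi> i) (\<phi> i))"
    proof (intro sum.cong refl)
      fix i assume i: "i \<in> {..<d}"
      have "(\<Sum>j<d. (cnj (c i) * c j) * Bf (\<phi> i) (\<phi> j)) = (\<Sum>j\<in>{i}. (cnj (c i) * c j) * Bf (\<phi> i) (\<phi> j))"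
      proof (rule sum.mono_neutral_right)
        show "\<forall>j\<in>{..<d} - {i}. cnj (c i) * c j * Bf (\<phi> i) (\<phi> j) = 0"
        proof
          fix j assume j: "j \<in> {..<d} - {i}"
          have "Bf (\<phi> i) (\<phi> j) = 0"
            unfolding Bf_def \<phi>_def \<Pi>_def N_def
            by (rule cross_zero[OF n2 S_sub nc w_on v_on]) (use i j in auto)
          thus "cnj (c i) * c j * Bf (\<phi> i) (\<phi> j) = 0" by simp
        qed
      qed (use i in auto)
      also have "\<dots> = complex_of_real ((\<alpha> i)\<^sup>2) * Bf (\<phi> i) (\<phi> i)"
        by (simp add: c_def power2_eq_square)
      finally show "(\<Sum>j<d. (cnj (c i) * c j) * Bf (\<phi> i) (\<phi> j)) = complex_of_real ((\<alpha> i)\<^sup>2) * Bf (\<phi> i) (\<phi> i)" .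
    qed
    finally show "mtrace N (mmult N \<Pi> \<rho>) = mtrace N (mmult N \<Pi> (outer \<psi> \<psi>))"
      using T_rho T_psi by simp
  next
    define u where "u = (\<lambda>i x. \<Sum>z\<in>N. \<Pi> x z * \<phi> i z)"
    have psd': "Bf a a = complex_of_real (\<Sum>x\<in>N. (cmod (\<Sum>z\<in>N. \<Pi> x z * a z))\<^sup>2)" for a
      unfolding Bf_def by (rule psd[OF finN herm idem])
    define R where "R = (\<Sum>i<d. (\<alpha> i)\<^sup>2 * (\<Sum>x\<in>N. (cmod (u i x))\<^sup>2))"
    define Q where "Q = (\<Sum>x\<in>N. (cmod (\<Sum>z\<in>N. \<Pi> x z * \<psi> z))\<^sup>2)"
    have R_eq: "mtrace N (mmult N \<Pi> \<rho>) = complex_of_real R"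
      unfolding T_rho R_def psd' u_def by simp
    have Q_eq: "mtrace N (mmult N \<Pi> (outer \<psi> \<psi>)) = complex_of_real Q"
      unfolding T_psi Q_def psd' ..
    have lin: "(\<Sum>z\<in>N. \<Pi> x z * \<psi> z) = (\<Sum>i<d. c i * u i x)" for x
    proof -
      have "(\<Sum>z\<in>N. \<Pi> x z * \<psi> z) = (\<Sum>z\<in>N. \<Sum>i<d. c i * (\<Pi> x z * \<phi> i z))"
        by (intro sum.cong refl) (simp add: psi_eq sum_distrib_left algebra_simps)
      also have "\<dots> = (\<Sum>i<d. c i * u i x)"
        unfolding u_def sum_distrib_left by (rule sum.swap)
      finally show ?thesis .
    qed
    have "Q \<le> (\<Sum>x\<in>N. real d * (\<Sum>i<d. (cmod (c i * u i x))\<^sup>2))"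
      unfolding Q_def lin by (intro sum_mono cs_complex)
    also have "\<dots> = real d * (\<Sum>x\<in>N. \<Sum>i<d. (\<alpha> i)\<^sup>2 * (cmod (u i x))\<^sup>2)"
      by (simp add: sum_distrib_left c_def norm_mult power_mult_distrib)
    also have "\<dots> = real d * R"
      unfolding R_def by (simp add: sum_distrib_left sum.swap[of _ N])
    finally have QR: "Q \<le> real d * R" .
    have R0: "R \<ge> 0" unfolding R_def by (intro sum_nonneg mult_nonneg_nonneg) auto
    have "Q / real d \<le> R"
    proof (cases "d = 0")
      case True thus ?thesis using R0 by simp
    next
      case False thus ?thesis using QR by (simp add: divide_le_eq mult.commute)
    qed
    thus "mtrace N (mmult N \<Pi> (outer \<psi> \<psi>)) / of_nat d \<le> mtrace N (mmult N \<Pi> \<rho>)"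
      unfolding R_eq Q_eq by (simp add: less_eq_complex_def)
  qed
qed

end
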